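(* For any finite alphabet $\mathfrak{G}$, the series $\mathcal{I}(q,t) = \sum_{\mathfrak{s}\preceq\mathfrak{t}} q^{\deg(\mathfrak{s})} t^{\deg(\mathfrak{t})}$ satisfies $\mathcal{I}(q,t) = 1 + t\,\mathcal{R}_\mathfrak{G}\big(\mathcal{I}(q,t) - qt\,\mathcal{R}_\mathfrak{G}(\mathcal{I}(q,t))\big) + qt\,\mathcal{R}_\mathfrak{G}(\mathcal{I}(q,t))$.
   Context: $\mathfrak{G}$ is a finite alphabet (letters with arities $|\mathtt{a}|\geq 1$), and $\mathcal{R}_\mathfrak{G}(t) = \sum_{\mathtt{a}\in\mathfrak{G}} t^{|\mathtt{a}|}$. A $\mathfrak{G}$-tree is either the leaf (the tree with no internal node) or a root decorated by a letter $\mathtt{a}\in\mathfrak{G}$ with $|\mathtt{a}|$ children that are $\mathfrak{G}$-trees; its degree $\deg$ is its number of internal nodes. The $\mathfrak{G}$-prefix poset is the set of $\mathfrak{G}$-trees ordered by $\mathfrak{s}\preceq\mathfrak{t}$ iff $\mathfrak{s}$ is a prefix of $\mathfrak{t}$, i.e. $\mathfrak{t}$ is obtained by grafting some $\mathfrak{G}$-trees onto the leaves of $\mathfrak{s}$. The series $\mathcal{I}(q,t)$ enumerates all intervals $[\mathfrak{s},\mathfrak{t}]$ of this poset, the sum ranging over all pairs of $\mathfrak{G}$-trees with $\mathfrak{s}\preceq\mathfrak{t}$. *)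

theory Defs
  imports "HOL-Computational_Algebra.Formal_Power_Series"
begin

datatype 'a tree = Leaf | Node 'a "'a tree list"

inductive gtree :: "'a set \<Rightarrow> ('a \<Rightarrow> nat) \<Rightarrow> 'a tree \<Rightarrow> bool" for G ar where
  gtree_Leaf: "gtree G ar Leaf"
| gtree_Node: "a \<in> G \<Longrightarrow> length ts = ar a \<Longrightarrow> (\<forall>t\<in>set ts. gtree G ar t)
               \<Longrightarrow> gtree G ar (Node a ts)"

fun deg :: "'a tree \<Rightarrow> nat" where
  "deg Leaf = 0"
| "deg (Node a ts) = Suc (sum_list (map deg ts))"

text \<open>Prefix order: t is obtained by grafting trees onto the leaves of s.\<close>
inductive is_prefix :: "'a tree \<Rightarrow> 'a tree \<Rightarrow> bool" where
  prefix_Leaf: "is_prefix Leaf t"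
| prefix_Node: "list_all2 is_prefix ss ts \<Longrightarrow> is_prefix (Node a ss) (Node a ts)"
monos list_all2_mono

text \<open>Bivariate series in int fps fps: outer variable t, inner variable q.
  Coefficient of q^n t^m is the number of intervals [s,t] of the G-prefix poset
  with deg s = n and deg t = m.\<close>
definition interval_series :: "'a set \<Rightarrow> ('a \<Rightarrow> nat) \<Rightarrow> int fps fps" where
  "interval_series G ar = Abs_fps (\<lambda>m. Abs_fps (\<lambda>n. of_nat (card
     {(s, t). gtree G ar s \<and> gtree G ar t \<and> is_prefix s t \<and> deg s = n \<and> deg t = m})))"

definition R_G :: "'a set \<Rightarrow> ('a \<Rightarrow> nat) \<Rightarrow> 'b::comm_semiring_1 \<Rightarrow> 'b" where
  "R_G G ar x = (\<Sum>a\<in>G. x ^ ar a)"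

end

theory Submission
  imports Defs
begin

definition Phi :: "'b set \<Rightarrow> ('b \<Rightarrow> nat) \<Rightarrow> ('b \<Rightarrow> 'r::comm_ring_1) \<Rightarrow> 'r fps" where
  "Phi S w f = Abs_fps (\<lambda>m. \<Sum>x\<in>{x\<in>S. w x = m}. f x)"

definition finlev :: "'b set \<Rightarrow> ('b \<Rightarrow> nat) \<Rightarrow> bool" where
  "finlev S w = (\<forall>m. finite {x\<in>S. w x = m})"

lemma finlev_subset: "finlev S w \<Longrightarrow> A \<subseteq> S \<Longrightarrow> finlev A w"
proof -
  assume a: "finlev S w" "A \<subseteq> S"
  { fix m
    have "{x\<in>A. w x = m} \<subseteq> {x\<in>S. w x = m}" using a(2) by auto
    moreover have "finite {x\<in>S. w x = m}" using a(1) by (simp add: finlev_def)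
    ultimately have "finite {x\<in>A. w x = m}" by (rule finite_subset) }
  thus ?thesis by (simp add: finlev_def)
qed

lemma finlev_le: assumes "finlev S w" shows "finite {x\<in>S. w x \<le> m}"
proof -
  have "{x\<in>S. w x \<le> m} = (\<Union>i\<in>{..m}. {x\<in>S. w x = i})" by auto
  thus ?thesis using assms unfolding finlev_def by simp
qed

lemma Phi_cong: "(\<And>x. x \<in> S \<Longrightarrow> w x = w' x) \<Longrightarrow> (\<And>x. x \<in> S \<Longrightarrow> f x = f' x) \<Longrightarrow> Phi S w f = Phi S w' f'"
  unfolding Phi_def
proof (intro arg_cong[where f=Abs_fps] ext)
  fix m assume a: "(\<And>x. x \<in> S \<Longrightarrow> w x = w' x)" "(\<And>x. x \<in> S \<Longrightarrow> f x = f' x)"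
  have "{x\<in>S. w x = m} = {x\<in>S. w' x = m}" using a by auto
  thus "(\<Sum>x\<in>{x\<in>S. w x = m}. f x) = (\<Sum>x\<in>{x\<in>S. w' x = m}. f' x)"
    using a by (auto intro: sum.cong)
qed

lemma Phi_empty: "Phi {} w f = 0"
  unfolding Phi_def by (simp add: fps_zero_def)

lemma Phi_union: assumes "finlev A w" "finlev B w" "A \<inter> B = {}"
  shows "Phi (A \<union> B) w f = Phi A w f + Phi B w f"
proof (rule fps_ext)
  fix m
  have e: "{x\<in>A\<union>B. w x = m} = {x\<in>A. w x = m} \<union> {x\<in>B. w x = m}" by auto
  show "fps_nth (Phi (A \<union> B) w f) m = fps_nth (Phi A w f + Phi B w f) m"
    unfolding Phi_def fps_add_nth fps_nth_Abs_fps e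
    by (rule sum.union_disjoint) (use assms in \<open>auto simp: finlev_def\<close>)
qed

lemma finlev_UN: "finite G \<Longrightarrow> (\<forall>a\<in>G. finlev (S a) w) \<Longrightarrow> finlev (\<Union>a\<in>G. S a) w"
proof -
  assume a: "finite G" "\<forall>a\<in>G. finlev (S a) w"
  { fix m have "{x\<in>(\<Union>a\<in>G. S a). w x = m} = (\<Union>a\<in>G. {x\<in>S a. w x = m})" by auto
    hence "finite {x\<in>(\<Union>a\<in>G. S a). w x = m}" using a by (simp add: finlev_def) }
  thus ?thesis by (simp add: finlev_def)
qed

lemma Phi_UN: assumes "finite G" "\<forall>a\<in>G. finlev (S a) w" "\<forall>a\<in>G. \<forall>b\<in>G. a \<noteq> b \<longrightarrow> S a \<inter> S b = {}"
  shows "Phi (\<Union>a\<in>G. S a) w f = (\<Sum>a\<in>G. Phi (S a) w f)"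
  using assms
proof (induction G rule: finite_induct)
  case empty thus ?case by (simp add: Phi_empty)
next
  case (insert a G)
  have "Phi (\<Union>b\<in>insert a G. S b) w f = Phi (S a \<union> (\<Union>b\<in>G. S b)) w f" by simp
  also have "\<dots> = Phi (S a) w f + Phi (\<Union>b\<in>G. S b) w f"
    by (rule Phi_union) (use insert in \<open>auto intro!: finlev_UN\<close>)
  also have "\<dots> = Phi (S a) w f + (\<Sum>b\<in>G. Phi (S b) w f)" using insert by simp
  finally show ?case using insert by simp
qed

lemma Phi_image: assumes "inj_on h S" shows "Phi (h ` S) w f = Phi S (w \<circ> h) (f \<circ> h)"
proof (rule fps_ext)
  fix m
  have e: "{x\<in>h ` S. w x = m} = h ` {x\<in>S. w (h x) = m}" by auto
  have i: "inj_on h {x\<in>S. w (h x) = m}" using assms by (rule inj_on_subset) auto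
  show "fps_nth (Phi (h ` S) w f) m = fps_nth (Phi S (w \<circ> h) (f \<circ> h)) m"
    unfolding Phi_def fps_nth_Abs_fps e using sum.reindex[OF i, of f] by simp
qed

lemma finlev_image: "inj_on h S \<Longrightarrow> finlev S (w \<circ> h) \<Longrightarrow> finlev (h ` S) w"
proof -
  assume a: "inj_on h S" "finlev S (w \<circ> h)"
  { fix m have e: "{x\<in>h ` S. w x = m} = h ` {x\<in>S. w (h x) = m}" by auto
    have "finite {x\<in>h ` S. w x = m}" unfolding e using a by (simp add: finlev_def) }
  thus ?thesis by (simp add: finlev_def)
qed

lemma Phi_X: "fps_X * Phi S w f = Phi S (\<lambda>x. Suc (w x)) f"
proof (rule fps_ext)
  fix m show "fps_nth (fps_X * Phi S w f) m = fps_nth (Phi S (\<lambda>x. Suc (w x)) f) m"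
    by (cases m) (simp_all add: Phi_def)
qed

lemma Phi_const: "fps_const c * Phi S w f = Phi S w (\<lambda>x. c * f x)"
  by (rule fps_ext) (simp add: Phi_def sum_distrib_left)

lemma Phi_single: "Phi {x} w f = fps_const (f x) * fps_X ^ (w x)"
proof (rule fps_ext)
  fix n
  have e: "{y\<in>{x}. w y = n} = (if n = w x then {x} else {})" by auto
  have "fps_const (f x) * fps_X ^ (w x) = fps_X ^ (w x) * fps_const (f x)" by (simp add: mult.commute)
  thus "fps_nth (Phi {x} w f) n = fps_nth (fps_const (f x) * fps_X ^ (w x)) n"
    unfolding Phi_def fps_nth_Abs_fps e by (simp add: fps_X_power_mult_nth)
qed

lemma finlev_times: assumes "finlev A w" "finlev B v"
  shows "finlev (A \<times> B) (\<lambda>(x,y). w x + v y)"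
proof -
  { fix m
    have "{p\<in>A \<times> B. (\<lambda>(x,y). w x + v y) p = m} \<subseteq> {x\<in>A. w x \<le> m} \<times> {y\<in>B. v y \<le> m}" by auto
    hence "finite {p\<in>A \<times> B. (\<lambda>(x,y). w x + v y) p = m}"
      using finlev_le[OF assms(1)] finlev_le[OF assms(2)] by (meson finite_SigmaI rev_finite_subset) }
  thus ?thesis by (simp add: finlev_def)
qed

lemma Phi_mult: assumes "finlev A w" "finlev B v"
  shows "Phi A w f * Phi B v g = Phi (A \<times> B) (\<lambda>(x,y). w x + v y) (\<lambda>(x,y). f x * g y)"
proof (rule fps_ext)
  fix m
  define Tg where "Tg = {p\<in>A \<times> B. (\<lambda>(x,y). w x + v y) p = m}"
  have fT: "finite Tg" using finlev_times[OF assms] unfolding finlev_def Tg_def by blast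
  have "fps_nth (Phi A w f * Phi B v g) m = (\<Sum>i=0..m. (\<Sum>x\<in>{x\<in>A. w x = i}. f x) * (\<Sum>y\<in>{y\<in>B. v y = m - i}. g y))"
    by (simp add: Phi_def fps_mult_nth)
  also have "\<dots> = (\<Sum>i=0..m. \<Sum>p\<in>{p\<in>Tg. w (fst p) = i}. (\<lambda>(x,y). f x * g y) p)"
  proof (rule sum.cong[OF refl])
    fix i assume i: "i \<in> {0..m}"
    have e: "{p\<in>Tg. w (fst p) = i} = {x\<in>A. w x = i} \<times> {y\<in>B. v y = m - i}"
      using i by (auto simp: Tg_def)
    show "(\<Sum>x\<in>{x\<in>A. w x = i}. f x) * (\<Sum>y\<in>{y\<in>B. v y = m - i}. g y) = (\<Sum>p\<in>{p\<in>Tg. w (fst p) = i}. (\<lambda>(x,y). f x * g y) p)"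
      unfolding e sum_product sum.cartesian_product by simp
  qed
  also have "\<dots> = (\<Sum>p\<in>Tg. (\<lambda>(x,y). f x * g y) p)"
    by (rule sum.group) (use fT in \<open>auto simp: Tg_def\<close>)
  also have "\<dots> = fps_nth (Phi (A \<times> B) (\<lambda>(x,y). w x + v y) (\<lambda>(x,y). f x * g y)) m"
    by (simp add: Phi_def Tg_def)
  finally show "fps_nth (Phi A w f * Phi B v g) m = fps_nth (Phi (A \<times> B) (\<lambda>(x,y). w x + v y) (\<lambda>(x,y). f x * g y)) m" .
qed

definition lst :: "nat \<Rightarrow> 'b set \<Rightarrow> 'b list set" where
  "lst k S = {xs. length xs = k \<and> set xs \<subseteq> S}"

lemma finlev_lst: assumes "finlev S w" shows "finlev (lst k S) (\<lambda>xs. sum_list (map w xs))"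
proof -
  { fix m
    have "{xs\<in>lst k S. sum_list (map w xs) = m} \<subseteq> {xs. set xs \<subseteq> {x\<in>S. w x \<le> m} \<and> length xs = k}"
      by (auto simp: lst_def intro: member_le_sum_list)
    hence "finite {xs\<in>lst k S. sum_list (map w xs) = m}"
      using finite_lists_length_eq[OF finlev_le[OF assms]] by (rule finite_subset) }
  thus ?thesis by (simp add: finlev_def)
qed

lemma lst_Suc: "lst (Suc k) S = (\<lambda>(x,xs). x # xs) ` (S \<times> lst k S)"
  by (auto simp: lst_def length_Suc_conv image_iff)

lemma Phi_power: assumes "finlev S w"
  shows "Phi S w f ^ k = Phi (lst k S) (\<lambda>xs. sum_list (map w xs)) (\<lambda>xs. prod_list (map f xs))"
proof (induction k)
  case 0
  have "lst 0 S = {[]}" by (auto simp: lst_def)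
  thus ?case by (simp add: Phi_single)
next
  case (Suc k)
  have inj: "inj_on (\<lambda>(x,xs). x # xs) (S \<times> lst k S)" by (auto simp: inj_on_def)
  have "Phi S w f ^ Suc k = Phi S w f * Phi (lst k S) (\<lambda>xs. sum_list (map w xs)) (\<lambda>xs. prod_list (map f xs))"
    using Suc by simp
  also have "\<dots> = Phi (S \<times> lst k S) (\<lambda>(x,y). w x + sum_list (map w y)) (\<lambda>(x,y). f x * prod_list (map f y))"
    by (rule Phi_mult[OF assms finlev_lst[OF assms]])
  also have "\<dots> = Phi (lst (Suc k) S) (\<lambda>xs. sum_list (map w xs)) (\<lambda>xs. prod_list (map f xs))"
    unfolding lst_Suc Phi_image[OF inj] by (rule Phi_cong) auto
  finally show ?case .
qed


lemma gtree_Node_iff: "gtree G ar (Node a ts) \<longleftrightarrow> a \<in> G \<and> length ts = ar a \<and> (\<forall>t\<in>set ts. gtree G ar t)"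
  by (auto intro: gtree.intros elim: gtree.cases)

lemma prefix_Node_iff: "is_prefix (Node a ss) t \<longleftrightarrow> (\<exists>ts. t = Node a ts \<and> list_all2 is_prefix ss ts)"
  by (auto intro: is_prefix.intros elim: is_prefix.cases)

lemma sum_list_le_all2: "list_all2 (\<lambda>x y. f x \<le> (g y::nat)) xs ys \<Longrightarrow> sum_list (map f xs) \<le> sum_list (map g ys)"
  by (induction rule: list_all2_induct) auto

lemma prefix_deg: "is_prefix s t \<Longrightarrow> deg s \<le> deg t"
proof (induction rule: is_prefix.induct)
  case (prefix_Leaf t) show ?case by simp
next
  case (prefix_Node ss ts a)
  hence "list_all2 (\<lambda>x y. deg x \<le> deg y) ss ts" by (auto elim: list_all2_mono)
  hence "sum_list (map deg ss) \<le> sum_list (map deg ts)" by (rule sum_list_le_all2)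
  thus ?case by simp
qed

lemma fin_trees: assumes "finite G" shows "finite {t. gtree G ar t \<and> deg t \<le> m}"
proof (induction m)
  case 0
  have "{t. gtree G ar t \<and> deg t \<le> 0} \<subseteq> {Leaf}"
  proof
    fix t assume "t \<in> {t. gtree G ar t \<and> deg t \<le> 0}" thus "t \<in> {Leaf}" by (cases t) auto
  qed
  thus ?case by (rule finite_subset) simp
next
  case (Suc m)
  define B where "B = {t. gtree G ar t \<and> deg t \<le> m}"
  have "{t. gtree G ar t \<and> deg t \<le> Suc m} \<subseteq> insert Leaf (\<Union>a\<in>G. Node a ` {ts. set ts \<subseteq> B \<and> length ts = ar a})"
  proof
    fix t assume t: "t \<in> {t. gtree G ar t \<and> deg t \<le> Suc m}"
    show "t \<in> insert Leaf (\<Union>a\<in>G. Node a ` {ts. set ts \<subseteq> B \<and> length ts = ar a})"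
    proof (cases t)
      case Leaf thus ?thesis by simp
    next
      case (Node a ts)
      have "set ts \<subseteq> B"
      proof
        fix c assume c: "c \<in> set ts"
        have "deg c \<le> sum_list (map deg ts)" using c by (intro member_le_sum_list) auto
        thus "c \<in> B" using t c Node by (auto simp: B_def gtree_Node_iff)
      qed
      thus ?thesis using t Node by (auto simp: gtree_Node_iff)
    qed
  qed
  moreover have "finite (insert Leaf (\<Union>a\<in>G. Node a ` {ts. set ts \<subseteq> B \<and> length ts = ar a}))"
    using Suc assms unfolding B_def by (auto intro!: finite_lists_length_eq)
  ultimately show ?case by (rule finite_subset)
qed

abbreviation Tr where "Tr G ar \<equiv> {t. gtree G ar t}"

lemma finlev_Tr: assumes "finite G" shows "finlev (Tr G ar) deg"
proof -
  { fix m have "{t\<in>Tr G ar. deg t = m} \<subseteq> {t. gtree G ar t \<and> deg t \<le> m}" by auto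
    hence "finite {t\<in>Tr G ar. deg t = m}" using fin_trees[OF assms] by (rule finite_subset) }
  thus ?thesis by (simp add: finlev_def)
qed

lemma Tr_decomp: "Tr G ar = {Leaf} \<union> (\<Union>a\<in>G. Node a ` lst (ar a) (Tr G ar))"
proof (rule set_eqI)
  fix t show "t \<in> Tr G ar \<longleftrightarrow> t \<in> {Leaf} \<union> (\<Union>a\<in>G. Node a ` lst (ar a) (Tr G ar))"
    by (cases t) (auto simp: gtree_Node_iff lst_def intro: gtree.intros)
qed

lemma prod_list_map_one: "prod_list (map (\<lambda>_. (1::'r::monoid_mult)) xs) = 1"
  by (induction xs) auto

definition Tser :: "'a set \<Rightarrow> ('a \<Rightarrow> nat) \<Rightarrow> 'r::comm_ring_1 fps" where
  "Tser G ar = Phi (Tr G ar) deg (\<lambda>_. 1)"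

lemma Tser_eq: fixes G :: "'a set" assumes "finite G" shows "Tser G ar = (1 :: 'r::comm_ring_1 fps) + fps_X * R_G G ar (Tser G ar)"
proof -
  have fT: "finlev (Tr G ar) deg" by (rule finlev_Tr[OF assms])
  have sub: "\<And>a. a \<in> G \<Longrightarrow> Node a ` lst (ar a) (Tr G ar) \<subseteq> Tr G ar"
    by (auto simp: lst_def gtree_Node_iff)
  have fU: "finlev (\<Union>a\<in>G. Node a ` lst (ar a) (Tr G ar)) deg"
    using fT by (rule finlev_subset) (use sub in blast)
  have fa: "\<forall>a\<in>G. finlev (Node a ` lst (ar a) (Tr G ar)) deg"
    using fT sub by (auto intro: finlev_subset)
  have e1: "(Tser G ar :: 'r fps) = Phi ({Leaf} \<union> (\<Union>a\<in>G. Node a ` lst (ar a) (Tr G ar))) deg (\<lambda>_. 1)"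
    unfolding Tser_def by (rule arg_cong[where f="\<lambda>S. Phi S deg (\<lambda>_. 1)"], rule Tr_decomp)
  have e2: "Phi ({Leaf} \<union> (\<Union>a\<in>G. Node a ` lst (ar a) (Tr G ar))) deg (\<lambda>_. 1) = Phi {Leaf :: 'a tree} deg (\<lambda>_. 1) + Phi (\<Union>a\<in>G. Node a ` lst (ar a) (Tr G ar)) deg (\<lambda>_. (1::'r))"
    by (rule Phi_union[OF _ fU]) (auto simp: finlev_def)
  have e3: "Phi {Leaf :: 'a tree} deg (\<lambda>_. 1) = (1 :: 'r fps)" by (simp add: Phi_single)
  have e4: "Phi (\<Union>a\<in>G. Node a ` lst (ar a) (Tr G ar)) deg (\<lambda>_. 1) = (\<Sum>a\<in>G. Phi (Node a ` lst (ar a) (Tr G ar)) deg (\<lambda>_. (1::'r)))"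
    by (rule Phi_UN) (use assms fa in auto)
  have e5: "(\<Sum>a\<in>G. Phi (Node a ` lst (ar a) (Tr G ar)) deg (\<lambda>_. (1::'r))) = (\<Sum>a\<in>G. fps_X * Tser G ar ^ ar a)"
  proof (rule sum.cong[OF refl])
    fix a assume "a \<in> G"
    have inj: "inj_on (Node a) (lst (ar a) (Tr G ar))" by (auto simp: inj_on_def)
    have "Phi (Node a ` lst (ar a) (Tr G ar)) deg (\<lambda>_. (1::'r)) = Phi (lst (ar a) (Tr G ar)) (\<lambda>ts. Suc (sum_list (map deg ts))) (\<lambda>ts. prod_list (map (\<lambda>_. 1) ts))"
      unfolding Phi_image[OF inj] by (rule Phi_cong) (auto simp: prod_list_map_one)
    also have "\<dots> = fps_X * Tser G ar ^ ar a"
      unfolding Tser_def Phi_power[OF fT] Phi_X ..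
    finally show "Phi (Node a ` lst (ar a) (Tr G ar)) deg (\<lambda>_. (1::'r)) = fps_X * Tser G ar ^ ar a" .
  qed
  have e6: "fps_X * R_G G ar (Tser G ar) = (\<Sum>a\<in>G. fps_X * (Tser G ar :: 'r fps) ^ ar a)"
    unfolding R_G_def sum_distrib_left ..
  have "(Tser G ar :: 'r fps) = 1 + (\<Sum>a\<in>G. fps_X * Tser G ar ^ ar a)"
    by (rule trans[OF e1], unfold e2 e3 e4 e5, rule refl)
  thus ?thesis unfolding e6 .
qed


abbreviation Pr where "Pr G ar \<equiv> {p. gtree G ar (fst p) \<and> gtree G ar (snd p) \<and> is_prefix (fst p) (snd p)}"

lemma finlev_Pr: assumes "finite G" shows "finlev (Pr G ar) (deg \<circ> snd)"
proof -
  have "finite {p\<in>Pr G ar. (deg \<circ> snd) p = m}" for m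
  proof -
    have "{p\<in>Pr G ar. (deg \<circ> snd) p = m} \<subseteq> {t. gtree G ar t \<and> deg t \<le> m} \<times> {t. gtree G ar t \<and> deg t \<le> m}"
    proof
      fix p assume "p \<in> {p\<in>Pr G ar. (deg \<circ> snd) p = m}"
      moreover have "deg (fst p) \<le> deg (snd p)" if "is_prefix (fst p) (snd p)" using that by (rule prefix_deg)
      ultimately show "p \<in> {t. gtree G ar t \<and> deg t \<le> m} \<times> {t. gtree G ar t \<and> deg t \<le> m}"
        by (cases p) auto
    qed
    moreover have "finite ({t. gtree G ar t \<and> deg t \<le> m} \<times> {t. gtree G ar t \<and> deg t \<le> m})"
      by (intro finite_cartesian_product fin_trees[OF assms])
    ultimately show ?thesis by (rule finite_subset)
  qed
  thus ?thesis unfolding finlev_def by blast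
qed

definition hP :: "'a \<Rightarrow> ('a tree \<times> 'a tree) list \<Rightarrow> 'a tree \<times> 'a tree" where
  "hP a ps = (Node a (map fst ps), Node a (map snd ps))"

lemma inj_hP: "inj_on (hP a) X"
proof (rule inj_onI)
  fix x y assume "hP a x = hP a y"
  hence "map fst x = map fst y" "map snd x = map snd y" by (auto simp: hP_def)
  thus "x = y" by (metis zip_map_fst_snd)
qed

lemma list_all2_fst_snd: "list_all2 R (map fst ps) (map snd ps) \<longleftrightarrow> (\<forall>p\<in>set ps. R (fst p) (snd p))"
  by (induction ps) auto

lemma Pr_decomp: "Pr G ar = (\<lambda>t. (Leaf, t)) ` Tr G ar \<union> (\<Union>a\<in>G. hP a ` lst (ar a) (Pr G ar))"
proof (rule set_eqI)
  fix p :: "'a tree \<times> 'a tree"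
  obtain s t where p: "p = (s, t)" by fastforce
  show "p \<in> Pr G ar \<longleftrightarrow> p \<in> (\<lambda>t. (Leaf, t)) ` Tr G ar \<union> (\<Union>a\<in>G. hP a ` lst (ar a) (Pr G ar))"
  proof
    assume pin: "p \<in> Pr G ar"
    have gs: "gtree G ar s" using pin unfolding p by simp
    have gt: "gtree G ar t" using pin unfolding p by simp
    have pr: "is_prefix s t" using pin unfolding p by simp
    show "p \<in> (\<lambda>t. (Leaf, t)) ` Tr G ar \<union> (\<Union>a\<in>G. hP a ` lst (ar a) (Pr G ar))"
    proof (cases s)
      case Leaf
      hence pe: "p = (\<lambda>t. (Leaf, t)) t" using p by simp
      have "t \<in> Tr G ar" using gt by simp
      hence "p \<in> (\<lambda>t. (Leaf, t)) ` Tr G ar" unfolding pe by (rule imageI)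
      thus ?thesis by (rule UnI1)
    next
      case (Node a ss)
      have "\<exists>ts. t = Node a ts \<and> list_all2 is_prefix ss ts" using pr unfolding Node prefix_Node_iff .
      then obtain ts where t: "t = Node a ts" and la: "list_all2 is_prefix ss ts" by blast
      have len: "length ss = length ts" using la by (rule list_all2_lengthD)
      have a: "a \<in> G" "length ss = ar a" "\<forall>c\<in>set ss. gtree G ar c" using gs unfolding Node gtree_Node_iff by blast+
      have b: "\<forall>c\<in>set ts. gtree G ar c" using gt unfolding t gtree_Node_iff by blast
      have zs: "set (zip ss ts) \<subseteq> Pr G ar"
      proof
        fix x assume x: "x \<in> set (zip ss ts)"
        obtain u v where uv: "x = (u, v)" by (cases x)
        have u: "u \<in> set ss" using x uv by (metis set_zip_leftD)
        have v: "v \<in> set ts" using x uv by (metis set_zip_rightD)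
        have "is_prefix u v" using la x uv unfolding list_all2_iff by blast
        thus "x \<in> Pr G ar" using a(3) b u v uv by simp
      qed
      have "zip ss ts \<in> lst (ar a) (Pr G ar)"
        unfolding lst_def using zs len a(2) by simp
      hence "hP a (zip ss ts) \<in> hP a ` lst (ar a) (Pr G ar)" by (rule imageI)
      moreover have "hP a (zip ss ts) = p" using p Node t len by (simp add: hP_def)
      ultimately have "p \<in> hP a ` lst (ar a) (Pr G ar)" by simp
      hence "p \<in> (\<Union>a\<in>G. hP a ` lst (ar a) (Pr G ar))" using a(1) by (rule UN_I[rotated])
      thus ?thesis by (rule UnI2)
    qed
  next
    assume "p \<in> (\<lambda>t. (Leaf, t)) ` Tr G ar \<union> (\<Union>a\<in>G. hP a ` lst (ar a) (Pr G ar))"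
    thus "p \<in> Pr G ar"
    proof
      assume "p \<in> (\<lambda>t. (Leaf, t)) ` Tr G ar" thus ?thesis by (auto intro: gtree.intros is_prefix.intros)
    next
      assume "p \<in> (\<Union>a\<in>G. hP a ` lst (ar a) (Pr G ar))"
      then obtain a ps where a: "a \<in> G" and ps: "ps \<in> lst (ar a) (Pr G ar)" and pp: "p = hP a ps" by blast
      have "list_all2 is_prefix (map fst ps) (map snd ps)" using ps by (auto simp: list_all2_fst_snd lst_def)
      thus ?thesis using a ps unfolding pp hP_def by (auto simp: gtree_Node_iff lst_def intro: is_prefix.intros)
    qed
  qed
qed

lemma power_sum_list_map: "(x::'r::comm_monoid_mult) ^ sum_list (map g xs) = prod_list (map (\<lambda>y. x ^ g y) xs)"
  by (induction xs) (auto simp: power_add)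

definition Iser :: "'a set \<Rightarrow> ('a \<Rightarrow> nat) \<Rightarrow> 'r::comm_ring_1 fps fps" where
  "Iser G ar = Phi (Pr G ar) (deg \<circ> snd) (\<lambda>p. fps_X ^ deg (fst p))"

lemma Iser_eq: fixes G :: "'a set" assumes "finite G"
  shows "(Iser G ar :: 'r::comm_ring_1 fps fps) = Tser G ar + (\<Sum>a\<in>G. fps_X * (fps_const fps_X * Iser G ar ^ ar a))"
proof -
  have fP: "finlev (Pr G ar) (deg \<circ> snd)" by (rule finlev_Pr[OF assms])
  have sub1: "(\<lambda>t. (Leaf :: 'a tree, t)) ` Tr G ar \<subseteq> Pr G ar" by (auto intro: gtree.intros is_prefix.intros)
  have sub: "\<And>a. a \<in> G \<Longrightarrow> hP a ` lst (ar a) (Pr G ar) \<subseteq> Pr G ar"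
    using Pr_decomp[of G ar] by blast
  have fU: "finlev (\<Union>a\<in>G. hP a ` lst (ar a) (Pr G ar)) (deg \<circ> snd)"
    using fP by (rule finlev_subset) (use sub in blast)
  have f1: "finlev ((\<lambda>t. (Leaf :: 'a tree, t)) ` Tr G ar) (deg \<circ> snd)"
    by (rule finlev_subset[OF fP sub1])
  have fa: "\<forall>a\<in>G. finlev (hP a ` lst (ar a) (Pr G ar)) (deg \<circ> snd)"
    using fP sub by (auto intro: finlev_subset)
  define f :: "'a tree \<times> 'a tree \<Rightarrow> 'r fps" where "f = (\<lambda>p. fps_X ^ deg (fst p))"
  have e1: "(Iser G ar :: 'r fps fps) = Phi ((\<lambda>t. (Leaf :: 'a tree, t)) ` Tr G ar \<union> (\<Union>a\<in>G. hP a ` lst (ar a) (Pr G ar))) (deg \<circ> snd) f"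
    unfolding Iser_def f_def by (rule arg_cong[where f="\<lambda>S. Phi S (deg \<circ> snd) (\<lambda>p. fps_X ^ deg (fst p))"], rule Pr_decomp)
  have e2: "Phi ((\<lambda>t. (Leaf :: 'a tree, t)) ` Tr G ar \<union> (\<Union>a\<in>G. hP a ` lst (ar a) (Pr G ar))) (deg \<circ> snd) f
     = Phi ((\<lambda>t. (Leaf :: 'a tree, t)) ` Tr G ar) (deg \<circ> snd) f + Phi (\<Union>a\<in>G. hP a ` lst (ar a) (Pr G ar)) (deg \<circ> snd) f"
    by (rule Phi_union[OF f1 fU]) (auto simp: hP_def)
  have inj1: "inj_on (\<lambda>t. (Leaf :: 'a tree, t)) (Tr G ar)" by (auto simp: inj_on_def)
  have e3: "Phi ((\<lambda>t. (Leaf :: 'a tree, t)) ` Tr G ar) (deg \<circ> snd) f = Tser G ar"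
    unfolding Phi_image[OF inj1] Tser_def by (rule Phi_cong) (auto simp: f_def)
  have e4: "Phi (\<Union>a\<in>G. hP a ` lst (ar a) (Pr G ar)) (deg \<circ> snd) f = (\<Sum>a\<in>G. Phi (hP a ` lst (ar a) (Pr G ar)) (deg \<circ> snd) f)"
    by (rule Phi_UN) (use assms fa in \<open>auto simp: hP_def\<close>)
  have e5: "(\<Sum>a\<in>G. Phi (hP a ` lst (ar a) (Pr G ar)) (deg \<circ> snd) f) = (\<Sum>a\<in>G. fps_X * (fps_const fps_X * Iser G ar ^ ar a))"
  proof (rule sum.cong[OF refl])
    fix a assume "a \<in> G"
    have "Phi (hP a ` lst (ar a) (Pr G ar)) (deg \<circ> snd) f = Phi (lst (ar a) (Pr G ar)) (\<lambda>ps. Suc (sum_list (map (deg \<circ> snd) ps))) (\<lambda>ps. fps_X * prod_list (map f ps))"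
      unfolding Phi_image[OF inj_hP] by (rule Phi_cong) (auto simp: f_def hP_def power_sum_list_map)
    also have "\<dots> = fps_X * (fps_const fps_X * Iser G ar ^ ar a)"
      unfolding Iser_def Phi_power[OF fP] Phi_X Phi_const f_def ..
    finally show "Phi (hP a ` lst (ar a) (Pr G ar)) (deg \<circ> snd) f = fps_X * (fps_const fps_X * Iser G ar ^ ar a)" .
  qed
  show ?thesis
    by (rule trans[OF e1], unfold e2 e3 e4 e5, rule refl)
qed

lemma sum_X_power: "finite F \<Longrightarrow> (\<Sum>x\<in>F. (fps_X :: int fps) ^ (w x)) = Abs_fps (\<lambda>n. of_nat (card {x\<in>F. w x = n}))"
proof (rule fps_ext)
  fix n assume F: "finite F"
  have "fps_nth (\<Sum>x\<in>F. (fps_X :: int fps) ^ (w x)) n = (\<Sum>x\<in>F. if w x = n then 1 else 0)"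
    by (simp add: fps_sum_nth fps_X_power_nth eq_commute)
  also have "\<dots> = of_nat (card {x\<in>F. w x = n})"
  proof -
    have "F \<inter> {x. w x = n} = {x\<in>F. w x = n}" by auto
    thus ?thesis using F by (simp add: sum.If_cases)
  qed
  finally show "fps_nth (\<Sum>x\<in>F. (fps_X :: int fps) ^ (w x)) n = fps_nth (Abs_fps (\<lambda>n. of_nat (card {x\<in>F. w x = n}))) n" by simp
qed

lemma interval_series_Iser: assumes "finite G" shows "interval_series G ar = Iser G ar"
proof (rule fps_ext)
  fix m
  have F: "finite {p\<in>Pr G ar. (deg \<circ> snd) p = m}" using finlev_Pr[OF assms] by (simp add: finlev_def)
  have "fps_nth (Iser G ar) m = (\<Sum>p\<in>{p\<in>Pr G ar. (deg \<circ> snd) p = m}. (fps_X :: int fps) ^ deg (fst p))"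
    by (simp add: Iser_def Phi_def)
  also have "\<dots> = Abs_fps (\<lambda>n. of_nat (card {p\<in>{p\<in>Pr G ar. (deg \<circ> snd) p = m}. deg (fst p) = n}))"
    by (rule sum_X_power[OF F])
  also have "\<dots> = fps_nth (interval_series G ar) m"
    unfolding interval_series_def fps_nth_Abs_fps
    by (rule arg_cong[where f=Abs_fps], rule ext, rule arg_cong[where f="\<lambda>S. of_nat (card S)"]) auto
  finally show "fps_nth (interval_series G ar) m = fps_nth (Iser G ar) m" ..
qed

lemma eq_add_imp_diff: "a = b + c \<Longrightarrow> a - c = (b::'x::ab_group_add)" by simp

theorem proposition3p13:
  fixes G :: "'a set" and ar :: "'a \<Rightarrow> nat"
  assumes "finite G" and "\<forall>a\<in>G. ar a \<ge> 1"
  defines "q \<equiv> fps_const (fps_X :: int fps)" and "t \<equiv> (fps_X :: int fps fps)"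
  defines "I \<equiv> interval_series G ar"
  shows "I = 1 + t * R_G G ar (I - q * t * R_G G ar I) + q * t * R_G G ar I"
proof -
  have II: "I = Iser G ar" unfolding I_def by (rule interval_series_Iser[OF assms(1)])
  have s: "(\<Sum>a\<in>G. fps_X * (fps_const fps_X * Iser G ar ^ ar a)) = q * t * R_G G ar (Iser G ar :: int fps fps)"
    unfolding q_def t_def R_G_def sum_distrib_left by (simp add: mult.assoc mult.left_commute)
  have e: "Iser G ar = Tser G ar + q * t * R_G G ar (Iser G ar :: int fps fps)"
    using Iser_eq[OF assms(1), where 'r=int, of ar] unfolding s .
  have d: "Iser G ar - q * t * R_G G ar (Iser G ar :: int fps fps) = Tser G ar" by (rule eq_add_imp_diff[OF e])
  have T: "Tser G ar = (1::int fps fps) + t * R_G G ar (Tser G ar)"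
    unfolding t_def by (rule Tser_eq[OF assms(1)])
  show ?thesis unfolding II d T[symmetric] by (rule e)
qed

end
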